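(* Let $P$ be a set of $n$ points in the plane in convex position, let $S$ be an optimal dominating set of $G(P)$, and let $\phi:\mathcal{A}\rightarrow S$ be an assignment (for some partition $\mathcal{A}$ of $P$) satisfying: (1) $\phi$ is line separable; (2) each center $p\in S$ is assigned at most two sublists, one of which contains $p$; (3) for any center $p_i$ that is assigned a second sublist $\beta_i$ (not containing $p_i$), there exist $p_t\in\beta_i$ and centers $q_1,q_2\in S$ with $q_1\in P(i,t)$, $q_2\in P(t,i)$, $p_t\notin D_{q_1}$, $p_t\notin D_{q_2}$. Then there exists a pair of centers $(p_i,p_j)$ in $S$ (a decoupling pair) such that: (a) each of $p_i$ and $p_j$ is assigned only one sublist; (b) for any center of $S$ that is assigned two sublists, one of them is contained in $P(i,j)$ and the other in $P(j,i)$.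
   Context: $P$ is in convex position (every point is a hull vertex), no three points collinear, no four cocircular; $P$ is the cyclic list $\langle p_1,\dots,p_n\rangle$ counterclockwise along the hull. A sublist is a contiguous subsequence of the cyclic list. $P[i,j]$ is the sublist from $p_i$ counterclockwise to $p_j$ inclusive; $P(i,j)$ excludes $p_i,p_j$. $D_p$ is the closed unit disk centered at $p$. $G(P)$ has an edge between two points of $P$ iff their distance is at most $1$. A dominating set $S\subseteq P$: every point of $P$ is in $S$ or within distance $1$ of a point of $S$; its points are centers. Optimal dominating set: the points carry positive weights and $S$ is a dominating set of minimum total weight (unit weights give the minimum-cardinality case). A partition $\mathcal{A}$ of $P$ is a partition of the cyclic list into consecutive nonempty disjoint sublists. An assignment $\phi:\mathcal{A}\to S$ maps each sublist $\alpha$ to one center $p$ with $\alpha\subseteq D_p$; the group of $p$ is the set of points in sublists assigned to $p$. $\phi$ is line separable if for every two distinct centers some line has the points of one group on one side or on the line and those of the other group strictly on the other side. *)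

theory Defs
  imports "HOL-Analysis.Analysis"
begin

text \<open>Points of the plane are vectors in real^2. The point set P is given by
  n and an indexing p 0, ..., p (n-1), counterclockwise along the convex hull.
  Sublists and sets of centers are represented by sets of indices in {..<n}.\<close>

definition orient :: "real^2 \<Rightarrow> real^2 \<Rightarrow> real^2 \<Rightarrow> real" where
  "orient a b c = (b$1 - a$1) * (c$2 - a$2) - (b$2 - a$2) * (c$1 - a$1)"

definition convex_ccw :: "nat \<Rightarrow> (nat \<Rightarrow> real^2) \<Rightarrow> bool" where
  "convex_ccw n p \<longleftrightarrow>
     inj_on p {..<n} \<and>
     (\<forall>i<n. p i \<notin> convex hull (p ` ({..<n} - {i}))) \<and>
     (\<forall>i<n. \<forall>j<n. \<forall>k<n. i \<noteq> j \<and> j \<noteq> k \<and> i \<noteq> k \<longrightarrow> orient (p i) (p j) (p k) \<noteq> 0) \<and>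
     (\<forall>i<n. \<forall>j<n. \<forall>k<n. \<forall>l<n. distinct [i, j, k, l] \<longrightarrow>
        \<not> (\<exists>c r. dist (p i) c = r \<and> dist (p j) c = r \<and> dist (p k) c = r \<and> dist (p l) c = r)) \<and>
     (\<forall>i<n. \<forall>k<n. k \<noteq> i \<and> k \<noteq> (i + 1) mod n \<longrightarrow>
        orient (p i) (p ((i + 1) mod n)) (p k) > 0)"

text \<open>P[i,j]: indices from i counterclockwise to j, inclusive.\<close>
definition cyc_closed :: "nat \<Rightarrow> nat \<Rightarrow> nat \<Rightarrow> nat set" where
  "cyc_closed n i j = {(i + m) mod n | m. m \<le> (j + n - i) mod n}"

text \<open>P(i,j): indices strictly between i and j counterclockwise (i, j excluded).\<close>
definition cyc_open :: "nat \<Rightarrow> nat \<Rightarrow> nat \<Rightarrow> nat set" where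
  "cyc_open n i j = {(i + m) mod n | m. 0 < m \<and> m < (j + n - i) mod n}"

definition sublist_idx :: "nat \<Rightarrow> nat set \<Rightarrow> bool" where
  "sublist_idx n A \<longleftrightarrow> (\<exists>i<n. \<exists>j<n. A = cyc_closed n i j)"

definition cyc_partition :: "nat \<Rightarrow> nat set set \<Rightarrow> bool" where
  "cyc_partition n \<A> \<longleftrightarrow>
     (\<forall>A\<in>\<A>. sublist_idx n A) \<and>
     (\<forall>A\<in>\<A>. \<forall>B\<in>\<A>. A \<noteq> B \<longrightarrow> A \<inter> B = {}) \<and>
     \<Union>\<A> = {..<n}"

text \<open>Edges of G(P): distance at most 1.\<close>
definition dominating :: "nat \<Rightarrow> (nat \<Rightarrow> real^2) \<Rightarrow> nat set \<Rightarrow> bool" where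
  "dominating n p S \<longleftrightarrow> S \<subseteq> {..<n} \<and>
     (\<forall>k<n. k \<in> S \<or> (\<exists>s\<in>S. dist (p k) (p s) \<le> 1))"

definition optimal_dominating ::
  "nat \<Rightarrow> (nat \<Rightarrow> real^2) \<Rightarrow> (nat \<Rightarrow> real) \<Rightarrow> nat set \<Rightarrow> bool" where
  "optimal_dominating n p w S \<longleftrightarrow> dominating n p S \<and>
     (\<forall>T. dominating n p T \<longrightarrow> sum w S \<le> sum w T)"

definition assignment ::
  "nat \<Rightarrow> (nat \<Rightarrow> real^2) \<Rightarrow> nat set \<Rightarrow> nat set set \<Rightarrow> (nat set \<Rightarrow> nat) \<Rightarrow> bool" where
  "assignment n p S \<A> \<phi> \<longleftrightarrow> cyc_partition n \<A> \<and>
     (\<forall>A\<in>\<A>. \<phi> A \<in> S \<and> (\<forall>k\<in>A. dist (p k) (p (\<phi> A)) \<le> 1))"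

definition group_of :: "nat set set \<Rightarrow> (nat set \<Rightarrow> nat) \<Rightarrow> nat \<Rightarrow> nat set" where
  "group_of \<A> \<phi> c = \<Union>{A\<in>\<A>. \<phi> A = c}"

definition line_separable ::
  "(nat \<Rightarrow> real^2) \<Rightarrow> nat set \<Rightarrow> nat set set \<Rightarrow> (nat set \<Rightarrow> nat) \<Rightarrow> bool" where
  "line_separable p S \<A> \<phi> \<longleftrightarrow>
     (\<forall>c\<in>S. \<forall>d\<in>S. c \<noteq> d \<longrightarrow>
        (\<exists>a::real^2. \<exists>b::real. a \<noteq> 0 \<and>
           (((\<forall>k\<in>group_of \<A> \<phi> c. a \<bullet> p k \<le> b) \<and> (\<forall>k\<in>group_of \<A> \<phi> d. a \<bullet> p k > b)) \<or>
            ((\<forall>k\<in>group_of \<A> \<phi> d. a \<bullet> p k \<le> b) \<and> (\<forall>k\<in>group_of \<A> \<phi> c. a \<bullet> p k > b)))))"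

definition n_assigned :: "nat set set \<Rightarrow> (nat set \<Rightarrow> nat) \<Rightarrow> nat \<Rightarrow> nat" where
  "n_assigned \<A> \<phi> c = card {A\<in>\<A>. \<phi> A = c}"

end

theory Submission
  imports Defs
begin

definition off :: "nat \<Rightarrow> nat \<Rightarrow> nat \<Rightarrow> nat" where
  "off n a b = (b + n - a) mod n"

lemma mod2: "(x::nat) < 2*n \<Longrightarrow> x mod n = (if x < n then x else x - n)"
  by (simp add: mod_if)

lemma off_eq: "a < n \<Longrightarrow> b < n \<Longrightarrow> off n a b = (if a \<le> b then b - a else b + n - a)"
  unfolding off_def by (subst mod2) auto

lemma off_lt: "a < n \<Longrightarrow> b < n \<Longrightarrow> off n a b < n"
  by (simp add: off_eq; linarith)

lemma off_0_iff: "a < n \<Longrightarrow> b < n \<Longrightarrow> off n a b = 0 \<longleftrightarrow> a = b"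
  by (simp add: off_eq; linarith)

lemma add_off: "a < n \<Longrightarrow> b < n \<Longrightarrow> (a + off n a b) mod n = b"
  by (simp add: off_eq mod2)

lemma off_add: "a < n \<Longrightarrow> m < n \<Longrightarrow> off n a ((a + m) mod n) = m"
  by (auto simp: off_eq mod2)

lemma cyc_open_eq: assumes "i < n" "j < n"
  shows "cyc_open n i j = {k. k < n \<and> 0 < off n i k \<and> off n i k < off n i j}"
proof -
  have "(i + m) mod n < n" for m using assms by simp
  show ?thesis unfolding cyc_open_def
  proof (intro set_eqI iffI)
    fix k assume "k \<in> {(i + m) mod n |m. 0 < m \<and> m < (j + n - i) mod n}"
    then obtain m where k: "k = (i+m) mod n" "0 < m" "m < off n i j" unfolding off_def by auto
    have "m < n" using k(3) off_lt[OF assms] by linarith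
    then show "k \<in> {k. k < n \<and> 0 < off n i k \<and> off n i k < off n i j}"
      using k assms off_add[of i n m] by auto
  next
    fix k assume "k \<in> {k. k < n \<and> 0 < off n i k \<and> off n i k < off n i j}"
    then show "k \<in> {(i + m) mod n |m. 0 < m \<and> m < (j + n - i) mod n}"
      using add_off[of i n k] assms unfolding off_def[symmetric] by force
  qed
qed

lemma cyc_closed_eq: assumes "i < n" "j < n"
  shows "cyc_closed n i j = {k. k < n \<and> off n i k \<le> off n i j}"
proof -
  show ?thesis unfolding cyc_closed_def
  proof (intro set_eqI iffI)
    fix k assume "k \<in> {(i + m) mod n |m. m \<le> (j + n - i) mod n}"
    then obtain m where k: "k = (i+m) mod n" "m \<le> off n i j" unfolding off_def by auto
    have "m < n" using k(2) off_lt[OF assms] by linarith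
    then show "k \<in> {k. k < n \<and> off n i k \<le> off n i j}"
      using k assms off_add[of i n m] by auto
  next
    fix k assume "k \<in> {k. k < n \<and> off n i k \<le> off n i j}"
    then show "k \<in> {(i + m) mod n |m. m \<le> (j + n - i) mod n}"
      using add_off[of i n k] assms unfolding off_def[symmetric] by force
  qed
qed

definition ccw3 :: "nat \<Rightarrow> nat \<Rightarrow> nat \<Rightarrow> nat \<Rightarrow> bool" where
  "ccw3 n a b c \<longleftrightarrow> a < n \<and> b < n \<and> c < n \<and> 0 < off n a b \<and> off n a b < off n a c"

lemma ccw3_rot: "ccw3 n a b c \<Longrightarrow> ccw3 n b c a"
  unfolding ccw3_def by (auto simp: off_eq split: if_splits)

lemma orient_rot: "orient a b c = orient b c a"
  unfolding orient_def by (simp add: algebra_simps)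

lemma orient_swap: "orient a c b = - orient a b c"
  unfolding orient_def by (simp add: algebra_simps)

lemma pluecker: "orient A B Z * orient A Y W = orient A B Y * orient A Z W + orient A B W * orient A Y Z"
  unfolding orient_def by (simp add: algebra_simps)

lemma conv_edge: assumes "convex_ccw n p" "i < n" "k < n" "k \<noteq> i" "k \<noteq> (i+1) mod n"
  shows "orient (p i) (p ((i+1) mod n)) (p k) > 0"
  using assms unfolding convex_ccw_def by blast

lemma fan_step: assumes "convex_ccw n p" "a < n" "0 < k" "Suc k < n"
  shows "orient (p a) (p ((a+k) mod n)) (p ((a + Suc k) mod n)) > 0"
proof -
  let ?i = "(a+k) mod n"
  have i: "?i < n" using assms by simp
  have e: "(?i + 1) mod n = (a + Suc k) mod n" by (simp add: mod_Suc_eq)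
  have "off n a ?i = k" using off_add assms by simp
  then have "a \<noteq> ?i" using assms off_0_iff[of a n a] by auto
  moreover have "off n a ((a + Suc k) mod n) = Suc k" using off_add[of a n "Suc k"] assms by simp
  then have "a \<noteq> (a + Suc k) mod n" using assms off_0_iff[of a n a] by auto
  ultimately have "orient (p ?i) (p ((?i+1) mod n)) (p a) > 0"
    using conv_edge[OF assms(1) i assms(2)] e by auto
  then show ?thesis using e orient_rot by metis
qed

lemma fan_first: assumes "convex_ccw n p" "a < n" "1 < k" "k < n"
  shows "orient (p a) (p ((a+1) mod n)) (p ((a + k) mod n)) > 0"
proof -
  have "off n a ((a + k) mod n) = k" using off_add assms by simp
  moreover have "off n a ((a + 1) mod n) = 1" using off_add[of a n 1] assms by simp
  ultimately have "(a + k) mod n \<noteq> a" "(a + k) mod n \<noteq> (a+1) mod n"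
    using assms off_0_iff[of a n a] by auto
  then show ?thesis using conv_edge[OF assms(1) assms(2), of "(a + k) mod n"] assms by simp
qed

lemma fan_pos: assumes "convex_ccw n p" "a < n" "0 < s" "s < t" "t < n"
  shows "orient (p a) (p ((a+s) mod n)) (p ((a + t) mod n)) > 0"
  using assms(4,5)
proof (induction t)
  case 0 then show ?case by simp
next
  case (Suc t)
  show ?case
  proof (cases "s = t")
    case True then show ?thesis using fan_step[OF assms(1,2,3)] Suc by simp
  next
    case False
    then have st: "s < t" using Suc by simp
    have IH: "orient (p a) (p ((a+s) mod n)) (p ((a + t) mod n)) > 0" using Suc st by simp
    show ?thesis
    proof (cases "s = 1")
      case True then show ?thesis using fan_first[OF assms(1,2), of "Suc t"] Suc st by simp
    next
      case False
      then have s1: "1 < s" using assms by simp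
      have h1: "orient (p a) (p ((a+1) mod n)) (p ((a + t) mod n)) > 0"
        using fan_first[OF assms(1,2)] s1 st Suc by simp
      have h2: "orient (p a) (p ((a+1) mod n)) (p ((a + s) mod n)) > 0"
        using fan_first[OF assms(1,2)] s1 st Suc by simp
      have h3: "orient (p a) (p ((a+1) mod n)) (p ((a + Suc t) mod n)) > 0"
        using fan_first[OF assms(1,2), of "Suc t"] s1 st Suc by simp
      have h4: "orient (p a) (p ((a+t) mod n)) (p ((a + Suc t) mod n)) > 0"
        using fan_step[OF assms(1,2)] s1 st Suc by simp
      have "orient (p a) (p ((a+1) mod n)) (p ((a + t) mod n)) *
            orient (p a) (p ((a+s) mod n)) (p ((a + Suc t) mod n)) > 0"
        using pluecker[of "p a" "p ((a+1) mod n)" "p ((a + t) mod n)" "p ((a+s) mod n)" "p ((a + Suc t) mod n)"]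
          h2 h4 h3 IH by (simp add: add_pos_pos)
      then show ?thesis using h1 zero_less_mult_pos by blast
    qed
  qed
qed

lemma ccw3_orient: assumes "convex_ccw n p" "ccw3 n a b c"
  shows "orient (p a) (p b) (p c) > 0"
proof -
  have a: "a < n" "b < n" "c < n" "0 < off n a b" "off n a b < off n a c"
    using assms(2) unfolding ccw3_def by auto
  have "off n a c < n" using off_lt a by simp
  then have "orient (p a) (p ((a + off n a b) mod n)) (p ((a + off n a c) mod n)) > 0"
    using fan_pos[OF assms(1) a(1) a(4) a(5)] by simp
  then show ?thesis using add_off a by simp
qed

lemma inner2: "(x::real^2) \<bullet> y = x$1*y$1 + x$2*y$2"
  by (simp add: inner_vec_def sum_2)

definition ccw4 :: "nat \<Rightarrow> nat \<Rightarrow> nat \<Rightarrow> nat \<Rightarrow> nat \<Rightarrow> bool" where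
  "ccw4 n a b c d \<longleftrightarrow> a < n \<and> b < n \<and> c < n \<and> d < n \<and> 0 < off n a b \<and> off n a b < off n a c \<and> off n a c < off n a d"

lemma ccw4_rot: "ccw4 n a b c d \<Longrightarrow> ccw4 n b c d a"
  unfolding ccw4_def by (auto simp: off_eq split: if_splits)

lemma ccw4_3: "ccw4 n a b c d \<Longrightarrow> ccw3 n a b c \<and> ccw3 n a b d \<and> ccw3 n a c d"
  unfolding ccw4_def ccw3_def by auto

lemma ccw4_3b: "ccw4 n a b c d \<Longrightarrow> ccw3 n b c d"
  using ccw4_rot ccw4_3 by blast

lemma four_ident:
  "orient B C D * (e \<bullet> A) + orient A B D * (e \<bullet> C) = orient A C D * (e \<bullet> B) + orient A B C * (e \<bullet> (D::real^2))"
  unfolding orient_def inner2 by (simp_all add: algebra_simps)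

lemma four_ident2:
  "orient B C D + orient A B D = orient A C D + orient A B C"
  unfolding orient_def by (simp_all add: algebra_simps)

lemma X4: assumes "convex_ccw n p" "ccw4 n a b c d"
  shows "\<not> (max (e \<bullet> p a) (e \<bullet> p c) < min (e \<bullet> p b) (e \<bullet> p d))"
proof
  assume m: "max (e \<bullet> p a) (e \<bullet> p c) < min (e \<bullet> p b) (e \<bullet> p d)"
  define M where "M = max (e \<bullet> p a) (e \<bullet> p c)"
  define N where "N = min (e \<bullet> p b) (e \<bullet> p d)"
  have o1: "orient (p b) (p c) (p d) > 0" using ccw3_orient[OF assms(1)] ccw4_3b[OF assms(2)] by blast
  have o2: "orient (p a) (p b) (p d) > 0" "orient (p a) (p c) (p d) > 0" "orient (p a) (p b) (p c) > 0"
    using ccw3_orient[OF assms(1)] ccw4_3[OF assms(2)] by blast+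
  have "orient (p b) (p c) (p d) * (e \<bullet> p a) \<le> orient (p b) (p c) (p d) * M"
    using o1 M_def by (simp add: mult_left_mono)
  moreover have "orient (p a) (p b) (p d) * (e \<bullet> p c) \<le> orient (p a) (p b) (p d) * M"
    using o2 M_def by (simp add: mult_left_mono)
  moreover have "orient (p a) (p c) (p d) * N \<le> orient (p a) (p c) (p d) * (e \<bullet> p b)"
    using o2 N_def by (simp add: mult_left_mono)
  moreover have "orient (p a) (p b) (p c) * N \<le> orient (p a) (p b) (p c) * (e \<bullet> p d)"
    using o2 N_def by (simp add: mult_left_mono)
  moreover have "(orient (p a) (p c) (p d) + orient (p a) (p b) (p c)) * M <
     (orient (p a) (p c) (p d) + orient (p a) (p b) (p c)) * N"
    using o2 m M_def N_def by (intro mult_strict_left_mono) auto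
  moreover have "M * (orient (p b) (p c) (p d) + orient (p a) (p b) (p d)) = M * (orient (p a) (p c) (p d) + orient (p a) (p b) (p c))"
    using four_ident2[of "p b" "p c" "p d" "p a"] by simp
  ultimately show False using four_ident[of "p b" "p c" "p d" e "p a"]
    by (simp add: algebra_simps)
qed

lemma cone_lemma:
  fixes g h d :: "real^2"
  assumes g: "norm g = 1" and h: "norm h = 1" and gh: "g \<bullet> h > 1/2" and d: "d \<noteq> 0"
    and c: "d \<bullet> (g+h) \<ge> 1/2 * norm d * norm (g+h)"
  shows "d \<bullet> g > 0"
proof (rule ccontr)
  assume "\<not> d \<bullet> g > 0"
  then have dg: "d \<bullet> g \<le> 0" by simp
  define c where "c = g \<bullet> h"
  define N where "N = norm (h - c *\<^sub>R g)"
  have gg: "g \<bullet> g = 1" using g by (simp add: dot_square_norm)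
  have hh: "h \<bullet> h = 1" using h by (simp add: dot_square_norm)
  have N2: "N^2 = 1 - c^2"
  proof -
    have "N^2 = (h - c *\<^sub>R g) \<bullet> (h - c *\<^sub>R g)" unfolding N_def by (simp add: dot_square_norm)
    also have "\<dots> = h \<bullet> h - 2 * c * (g \<bullet> h) + c^2 * (g \<bullet> g)"
      by (simp add: inner_diff_left inner_diff_right inner_commute power2_eq_square algebra_simps)
    finally show ?thesis using gg hh c_def by (simp add: power2_eq_square)
  qed
  have S2: "(norm (g+h))^2 = 2 + 2*c"
  proof -
    have "(norm (g+h))^2 = (g+h) \<bullet> (g+h)" by (simp add: dot_square_norm)
    also have "\<dots> = g \<bullet> g + 2 * (g \<bullet> h) + h \<bullet> h"
      by (simp add: inner_add_left inner_add_right inner_commute)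
    finally show ?thesis using gg hh c_def by simp
  qed
  have "d \<bullet> h = d \<bullet> (h - c *\<^sub>R g) + c * (d \<bullet> g)"
    by (simp add: inner_diff_right)
  moreover have "d \<bullet> (h - c *\<^sub>R g) \<le> norm d * N" unfolding N_def by (rule norm_cauchy_schwarz)
  moreover have "c * (d \<bullet> g) \<le> 0" using dg gh c_def by (simp add: mult_nonneg_nonpos)
  ultimately have "d \<bullet> (g+h) \<le> norm d * N" using dg by (simp add: inner_add_right)
  with c have "1/2 * norm d * norm (g+h) \<le> norm d * N" by linarith
  then have "1/2 * norm (g+h) \<le> N" using d by (simp add: mult.assoc)
  then have "(1/2 * norm (g+h))^2 \<le> N^2" by (intro power_mono) auto
  moreover have "(1/2 * norm (g+h))^2 = 1/4 * (norm (g+h))^2" by (simp add: power_mult_distrib power2_eq_square)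
  ultimately have "1/4 * (2 + 2*c) \<le> 1 - c^2" using N2 S2 by simp
  then have "(2*c - 1) * (c + 1) \<le> 0" by (simp add: algebra_simps power2_eq_square)
  moreover have "(2*c - 1) * (c + 1) > 0" using gh c_def by simp
  ultimately show False by linarith
qed

definition good :: "nat \<Rightarrow> (nat \<Rightarrow> real^2) \<Rightarrow> nat set \<Rightarrow> real^2 \<Rightarrow> real^2 \<Rightarrow> bool" where
  "good n F Q g h \<longleftrightarrow> Q \<subseteq> {..<n} \<and> norm g = 1 \<and> norm h = 1 \<and> g \<bullet> h > 1/2 \<and>
     (\<forall>d. d \<bullet> g > 0 \<and> d \<bullet> h > 0 \<longrightarrow> (\<exists>z\<in>Q. \<forall>w. w < n \<longrightarrow> w \<notin> Q \<longrightarrow> d \<bullet> F w < d \<bullet> F z))"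

definition mdir :: "real^2 \<Rightarrow> real^2 \<Rightarrow> real^2" where
  "mdir g h = (1 / norm (g+h)) *\<^sub>R (g+h)"

lemma mdir_props: assumes "good n F Q g h"
  shows "norm (mdir g h) = 1" "norm (g+h) > 0" "g + h = norm (g+h) *\<^sub>R mdir g h"
proof -
  have gg: "g \<bullet> g = 1" "h \<bullet> h = 1" "g \<bullet> h > 1/2" using assms unfolding good_def by (auto simp: dot_square_norm)
  have "(norm (g+h))^2 = g \<bullet> g + 2 * (g \<bullet> h) + h \<bullet> h"
    by (simp add: dot_square_norm[symmetric] inner_add_left inner_add_right inner_commute)
  then have "(norm (g+h))^2 > 0" using gg by simp
  then show np: "norm (g+h) > 0" by simp
  then show "norm (mdir g h) = 1" unfolding mdir_def by simp
  show "g + h = norm (g+h) *\<^sub>R mdir g h" unfolding mdir_def using np by simp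
qed

lemma good_dir: assumes "good n F Q g h" "d \<noteq> 0" "d \<bullet> mdir g h \<ge> 1/2 * norm d"
  shows "\<exists>z\<in>Q. \<forall>w. w < n \<longrightarrow> w \<notin> Q \<longrightarrow> d \<bullet> F w < d \<bullet> F z"
proof -
  have gh: "norm g = 1" "norm h = 1" "g \<bullet> h > 1/2" using assms unfolding good_def by auto
  note mp = mdir_props[OF assms(1)]
  have "d \<bullet> (g+h) = norm (g+h) * (d \<bullet> mdir g h)" by (subst mp(3)) simp
  also have "\<dots> \<ge> norm (g+h) * (1/2 * norm d)" using assms(3) mp(2) by (simp add: mult_left_mono)
  finally have c: "d \<bullet> (g+h) \<ge> 1/2 * norm d * norm (g+h)" by (simp add: algebra_simps)
  have "d \<bullet> g > 0" using cone_lemma[OF gh assms(2) c] .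
  moreover have "d \<bullet> h > 0" using cone_lemma[of h g d] gh assms(2) c by (simp add: inner_commute add.commute)
  ultimately show ?thesis using assms(1) unfolding good_def by blast
qed

lemma aux_sq: "(x::real)^2 = x/2 + x*(x - 1/2)"
  by (simp add: power2_eq_square right_diff_distrib)

lemma pair_conflict: assumes "good n F Q g h" "good n F Q' g' h'" "Q \<inter> Q' = {}"
  "mdir g h \<bullet> mdir g' h' \<ge> -1/2"
  shows False
proof -
  define m where "m = mdir g h"
  define m' where "m' = mdir g' h'"
  define c where "c = m \<bullet> m'"
  have mm: "m \<bullet> m = 1" "m' \<bullet> m' = 1" using mdir_props(1)[OF assms(1)] mdir_props(1)[OF assms(2)]
    unfolding m_def m'_def by (auto simp: dot_square_norm)
  define d where "d = m + m'"
  have nd: "(norm d)^2 = 2 + 2*c"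
    unfolding d_def c_def by (simp add: dot_square_norm[symmetric] inner_add_left inner_add_right inner_commute mm)
  have c: "c \<ge> -1/2" using assms(4) unfolding c_def m_def m'_def by simp
  then have "(norm d)^2 > 0" using nd by linarith
  then have "d \<noteq> 0" by auto
  have "m' \<bullet> m = m \<bullet> m'" by (rule inner_commute)
  then have dm: "d \<bullet> m = 1 + c" "d \<bullet> m' = 1 + c" unfolding d_def c_def by (auto simp: inner_add_left mm)
  have x0: "0 \<le> (1+c)*((1+c) - 1/2)" using c by simp
  have e1: "(1/2 * norm d)^2 = (1+c)/2" using nd by (simp add: power_divide)
  have "(1+c)^2 = (1+c)/2 + (1+c)*((1+c) - 1/2)" by (rule aux_sq)
  with x0 have "(1+c)/2 \<le> (1+c)^2" by linarith
  then have "(1/2 * norm d)^2 \<le> (1 + c)^2" by (simp only: e1)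
  moreover have "0 \<le> 1 + c" using c by simp
  ultimately have key: "1/2 * norm d \<le> 1 + c" by (rule power2_le_imp_le)
  have k1: "d \<bullet> mdir g h \<ge> 1/2 * norm d" using dm(1) key unfolding m_def by linarith
  have k2: "d \<bullet> mdir g' h' \<ge> 1/2 * norm d" using dm(2) key unfolding m'_def by linarith
  obtain z where z: "z \<in> Q" "\<forall>w. w < n \<longrightarrow> w \<notin> Q \<longrightarrow> d \<bullet> F w < d \<bullet> F z"
    using good_dir[OF assms(1) \<open>d \<noteq> 0\<close> k1] by blast
  obtain z' where z': "z' \<in> Q'" "\<forall>w. w < n \<longrightarrow> w \<notin> Q' \<longrightarrow> d \<bullet> F w < d \<bullet> F z'"
    using good_dir[OF assms(2) \<open>d \<noteq> 0\<close> k2] by blast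
  have "Q \<subseteq> {..<n}" "Q' \<subseteq> {..<n}" using assms(1,2) unfolding good_def by auto
  then have "z < n" "z' < n" using z(1) z'(1) by auto
  moreover have "z \<notin> Q'" "z' \<notin> Q" using z(1) z'(1) assms(3) by auto
  ultimately have "d \<bullet> F z' < d \<bullet> F z" "d \<bullet> F z < d \<bullet> F z'" using z(2) z'(2) by auto
  then show False by simp
qed

lemma three_conflict:
  assumes g1: "good n F Q1 g1 h1" and g2: "good n F Q2 g2 h2" and g3: "good n F Q3 g3 h3"
    and d12: "Q1 \<inter> Q2 = {}" and d13: "Q1 \<inter> Q3 = {}" and d23: "Q2 \<inter> Q3 = {}"
  shows False
proof -
  define m1 where "m1 = mdir g1 h1"
  define m2 where "m2 = mdir g2 h2"
  define m3 where "m3 = mdir g3 h3"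
  have a12: "m1 \<bullet> m2 < -1/2"
    using pair_conflict[OF g1 g2 d12] unfolding m1_def m2_def by force
  have a13: "m1 \<bullet> m3 < -1/2"
    using pair_conflict[OF g1 g3 d13] unfolding m1_def m3_def by force
  have a23: "m2 \<bullet> m3 < -1/2"
    using pair_conflict[OF g2 g3 d23] unfolding m2_def m3_def by force
  have n: "m1 \<bullet> m1 = 1" "m2 \<bullet> m2 = 1" "m3 \<bullet> m3 = 1"
    using mdir_props(1)[OF g1] mdir_props(1)[OF g2] mdir_props(1)[OF g3]
    unfolding m1_def m2_def m3_def by (auto simp: dot_square_norm)
  have c: "m2 \<bullet> m1 = m1 \<bullet> m2" "m3 \<bullet> m1 = m1 \<bullet> m3" "m3 \<bullet> m2 = m2 \<bullet> m3"
    by (simp_all add: inner_commute)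
  have "(m1+m2+m3) \<bullet> (m1+m2+m3) = m1 \<bullet> m1 + m2 \<bullet> m2 + m3 \<bullet> m3 + 2 * (m1 \<bullet> m2) + 2 * (m1 \<bullet> m3) + 2 * (m2 \<bullet> m3)"
    by (simp add: inner_add_left inner_add_right c)
  also have "\<dots> < 0" using n a12 a13 a23 by simp
  finally show False by (metis inner_ge_zero not_le)
qed

definition cr2 :: "real^2 \<Rightarrow> real^2 \<Rightarrow> real" where
  "cr2 a b = a$1 * b$2 - a$2 * b$1"

lemma orient_cr: "orient a b c = cr2 (b - a) (c - a)"
  by (simp add: orient_def cr2_def)

lemma decomp2: assumes "cr2 P Q \<noteq> 0"
  shows "r = (cr2 r Q / cr2 P Q) *\<^sub>R P + (cr2 P r / cr2 P Q) *\<^sub>R Q"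
proof -
  have h: "r$i = (cr2 r Q / cr2 P Q) * P$i + (cr2 P r / cr2 P Q) * Q$i" if "i = 1 \<or> i = 2" for i
  proof -
    have "cr2 r Q * P$i + cr2 P r * Q$i = cr2 P Q * r$i"
      using that by (auto simp: cr2_def algebra_simps)
    then have "(cr2 r Q * P$i + cr2 P r * Q$i) / cr2 P Q = r$i" using assms by simp
    then show ?thesis by (simp add: add_divide_distrib)
  qed
  show ?thesis unfolding vec_eq_iff forall_2 using h by simp
qed

lemma cr2_scale: "cr2 (s *\<^sub>R a) b = s * cr2 a b" "cr2 a (s *\<^sub>R b) = s * cr2 a b"
  by (simp_all add: cr2_def algebra_simps)

lemma cr2_anti: "cr2 a b = - cr2 b a" by (simp add: cr2_def)

lemma tri_bound:
  fixes U V X A :: "real^2"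
  assumes D: "cr2 (X - U) (V - U) > 0"
    and l: "cr2 (A - U) (V - U) \<ge> 0" and m: "cr2 (X - U) (A - U) \<ge> 0"
    and k: "cr2 (X - A) (V - A) \<ge> 0"
  shows "norm (A - U) \<le> max (norm (X - U)) (norm (V - U))"
    "norm (A - V) \<le> max (norm (X - V)) (norm (U - V))"
proof -
  define Dd where "Dd = cr2 (X - U) (V - U)"
  define la where "la = cr2 (A - U) (V - U) / Dd"
  define mu where "mu = cr2 (X - U) (A - U) / Dd"
  have la0: "la \<ge> 0" and mu0: "mu \<ge> 0" using D l m unfolding la_def mu_def Dd_def by auto
  have "cr2 (X - A) (V - A) = Dd - cr2 (A - U) (V - U) - cr2 (X - U) (A - U)"
    unfolding Dd_def cr2_def by (simp add: algebra_simps)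
  moreover have "Dd * la = cr2 (A - U) (V - U)" "Dd * mu = cr2 (X - U) (A - U)"
    using D unfolding la_def mu_def Dd_def by auto
  moreover have "Dd * (1 - la - mu) = Dd - Dd * la - Dd * mu" by (simp add: algebra_simps)
  ultimately have "Dd * (1 - la - mu) \<ge> 0" using k by simp
  then have nu: "1 - la - mu \<ge> 0" using D Dd_def by (simp add: zero_le_mult_iff)
  have e1: "A - U = la *\<^sub>R (X - U) + mu *\<^sub>R (V - U)"
    using decomp2[of "X - U" "V - U" "A - U"] D unfolding la_def mu_def Dd_def by simp
  have e2: "A - V = la *\<^sub>R (X - V) + (1 - la - mu) *\<^sub>R (U - V)"
  proof -
    have "A - V = (A - U) + (U - V)" by simp
    also have "\<dots> = la *\<^sub>R (X - U) + mu *\<^sub>R (V - U) + (U - V)" using e1 by simp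
    also have "\<dots> = la *\<^sub>R (X - V) + (1 - la - mu) *\<^sub>R (U - V)"
      by (simp add: algebra_simps)
    finally show ?thesis .
  qed
  define M1 where "M1 = max (norm (X - U)) (norm (V - U))"
  have "norm (A - U) \<le> norm (la *\<^sub>R (X - U)) + norm (mu *\<^sub>R (V - U))"
    using e1 norm_triangle_ineq by metis
  also have "\<dots> = la * norm (X - U) + mu * norm (V - U)" using la0 mu0 by simp
  also have "\<dots> \<le> la * M1 + mu * M1" unfolding M1_def using la0 mu0
    by (intro add_mono mult_left_mono) auto
  also have "\<dots> = (la + mu) * M1" by (simp add: algebra_simps)
  also have "\<dots> \<le> 1 * M1" using nu unfolding M1_def by (intro mult_right_mono) (auto simp: le_max_iff_disj)
  also have "\<dots> = M1" by simp
  finally show "norm (A - U) \<le> max (norm (X - U)) (norm (V - U))" unfolding M1_def .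
  define M2 where "M2 = max (norm (X - V)) (norm (U - V))"
  have "norm (A - V) \<le> norm (la *\<^sub>R (X - V)) + norm ((1 - la - mu) *\<^sub>R (U - V))"
    using e2 norm_triangle_ineq by metis
  also have "\<dots> = la * norm (X - V) + (1 - la - mu) * norm (U - V)" using la0 nu by simp
  also have "\<dots> \<le> la * M2 + (1 - la - mu) * M2" unfolding M2_def using la0 nu
    by (intro add_mono mult_left_mono) auto
  also have "\<dots> = (1 - mu) * M2" by (simp add: algebra_simps)
  also have "\<dots> \<le> 1 * M2" using mu0 unfolding M2_def by (intro mult_right_mono) (auto simp: le_max_iff_disj)
  also have "\<dots> = M2" by simp
  finally show "norm (A - V) \<le> max (norm (X - V)) (norm (U - V))" unfolding M2_def .
qed

lemma off_inj: "u < n \<Longrightarrow> w < n \<Longrightarrow> v < n \<Longrightarrow> off n u w = off n u v \<Longrightarrow> w = v"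
  using add_off by metis

lemma id_case1: "(d \<bullet> (U - V)) * cr2 (Xp - U) (V - Y) =
   - orient Y V U * (d \<bullet> (Xp - U)) - orient U Xp V * (d \<bullet> (V - Y))"
  by (simp add: cr2_def orient_def inner2 algebra_simps)

lemma id_k: "cr2 ((V - A) + t *\<^sub>R (Y - V)) (V - A) = t * orient Y V A"
  by (simp add: cr2_def orient_def algebra_simps)

lemma id_s0: "cr2 (V - U) (V - Y) = orient U Y V"
  by (simp add: cr2_def orient_def algebra_simps)

lemma norm_diff_sq: "(norm (b - a))^2 = (norm b)^2 + (norm a)^2 - 2 * (a \<bullet> (b::real^2))"
  by (simp add: power2_norm_eq_inner inner_diff_left inner_diff_right inner_commute)

lemma P0: assumes P: "convex_ccw n p" and uv: "u < n" "v < n"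
  and z: "z \<in> cyc_open n u v" "e \<bullet> p z > e \<bullet> p u" "e \<bullet> p z > e \<bullet> p v"
  and w: "w < n" "w \<notin> cyc_open n u v"
  shows "e \<bullet> p w < e \<bullet> p z"
proof (rule ccontr)
  assume c: "\<not> e \<bullet> p w < e \<bullet> p z"
  then have "w \<noteq> u" "w \<noteq> v" using z by auto
  have Qe: "cyc_open n u v = {k. k < n \<and> 0 < off n u k \<and> off n u k < off n u v}"
    using cyc_open_eq uv by blast
  have zz: "z < n" "0 < off n u z" "off n u z < off n u v" using z(1) Qe by auto
  have "off n u w \<noteq> 0" using off_0_iff uv w \<open>w \<noteq> u\<close> by metis
  moreover have "off n u w \<noteq> off n u v" using off_inj uv w \<open>w \<noteq> v\<close> by metis
  ultimately have "off n u v < off n u w" using w Qe by auto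
  then have "ccw4 n u z v w" unfolding ccw4_def using zz uv w by auto
  from X4[OF P this, of e] c z show False by auto
qed

lemma cap_good:
  assumes P: "convex_ccw n p" and uv: "u < n" "v < n" "u \<noteq> v"
    and a: "a \<in> cyc_open n u v" "dist (p a) (p u) > 1"
    and b: "b \<in> cyc_open n u v" "dist (p b) (p v) > 1"
    and cuv: "dist (p u) (p v) \<le> 1"
  shows "\<exists>g h. good n p (cyc_open n u v) g h"
proof -
  define Q where "Q = cyc_open n u v"
  define L where "L = off n u v"
  have Qe: "Q = {k. k < n \<and> 0 < off n u k \<and> off n u k < L}"
    unfolding Q_def L_def using cyc_open_eq uv by blast
  have Ln: "L < n" unfolding L_def using off_lt uv by blast
  have "a \<in> Q" using a(1) Q_def by simp
  then have "0 < off n u a" "off n u a < L" unfolding Qe by auto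
  then have L2: "2 \<le> L" by linarith
  define x where "x = (u + 1) mod n"
  define y where "y = (u + (L - 1)) mod n"
  have offx: "off n u x = 1" unfolding x_def using off_add[of u n 1] uv Ln L2 by simp
  have offy: "off n u y = L - 1" unfolding y_def using off_add[of u n "L - 1"] uv Ln by simp
  have xn: "x < n" unfolding x_def using uv by simp
  have yn: "y < n" unfolding y_def using uv by simp
  have xQ: "x \<in> Q" unfolding Qe using offx L2 xn by simp
  have yQ: "y \<in> Q" unfolding Qe using offy L2 yn by simp
  have inQ: "ccw3 n u z v" if "z \<in> Q" for z using that Qe uv unfolding ccw3_def L_def by auto
  have Ox: "orient (p u) (p x) (p v) > 0" using ccw3_orient[OF P inQ[OF xQ]] .
  have Oy: "orient (p u) (p y) (p v) > 0" using ccw3_orient[OF P inQ[OF yQ]] .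
  have Oyvu: "orient (p y) (p v) (p u) > 0" using ccw3_orient[OF P ccw3_rot[OF inQ[OF yQ]]] .
  have OxA: "orient (p u) (p x) (p k) \<ge> 0" if "k \<in> Q" for k
  proof (cases "k = x")
    case True then show ?thesis by (simp add: orient_def)
  next
    case False
    then have "off n u k \<noteq> 1" using off_inj[of u n k x] offx uv that Qe xn by auto
    then have "ccw4 n u x k v" using that Qe offx uv xQ L_def unfolding ccw4_def by auto
    then show ?thesis using ccw3_orient[OF P] ccw4_3 by (meson less_imp_le)
  qed
  have OyA: "orient (p y) (p v) (p k) \<ge> 0" if "k \<in> Q" for k
  proof (cases "k = y")
    case True then show ?thesis by (simp add: orient_def)
  next
    case False
    then have "off n u k \<noteq> L - 1" using off_inj[of u n k y] offy uv that Qe yn by auto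
    then have "ccw4 n u k y v" using that Qe offy uv yQ L2 L_def unfolding ccw4_def by auto
    then have "ccw3 n y v k" using ccw4_3b ccw3_rot by blast
    then show ?thesis using ccw3_orient[OF P] by (meson less_imp_le)
  qed
  have OuAv: "orient (p u) (p k) (p v) > 0" if "k \<in> Q" for k using ccw3_orient[OF P inQ[OF that]] .
  have fin: "\<exists>z\<in>Q. \<forall>w. w < n \<longrightarrow> w \<notin> Q \<longrightarrow> e \<bullet> p w < e \<bullet> p z"
    if "z \<in> Q" "e \<bullet> p z > e \<bullet> p u" "e \<bullet> p z > e \<bullet> p v" for e z
    using P0[OF P uv(1,2)] that unfolding Q_def by blast
  have Qsub: "Q \<subseteq> {..<n}" using Qe by auto
  define Pv where "Pv = p x - p u"
  define q where "q = p v - p y"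
  define cr where "cr = cr2 Pv q"
  have OxCr: "cr2 Pv (p v - p u) = orient (p u) (p x) (p v)" unfolding Pv_def by (simp add: orient_cr)
  show ?thesis
  proof (cases "cr \<le> 0")
    case True
    have "Pv \<noteq> 0" using Ox OxCr by (auto simp: cr2_def)
    then have nP: "norm Pv > 0" by simp
    define g where "g = (1 / norm Pv) *\<^sub>R Pv"
    have ng: "norm g = 1" unfolding g_def using nP by simp
    have gg: "g \<bullet> g = 1" using ng by (simp add: dot_square_norm)
    have prp: "\<exists>z\<in>Q. \<forall>w. w < n \<longrightarrow> w \<notin> Q \<longrightarrow> d \<bullet> p w < d \<bullet> p z" if "d \<bullet> g > 0" for d
    proof -
      have dP: "d \<bullet> Pv > 0" using that nP unfolding g_def by (simp add: zero_less_mult_iff zero_less_divide_iff)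
      then have fx: "d \<bullet> p x > d \<bullet> p u" unfolding Pv_def by (simp add: inner_diff_right)
      show ?thesis
      proof (cases "d \<bullet> p x > d \<bullet> p v")
        case True then show ?thesis using fin[OF xQ] fx by blast
      next
        case False
        show ?thesis
        proof (cases "d \<bullet> p y > d \<bullet> p v")
          case True
          then show ?thesis using fin[OF yQ] fx False by force
        next
          case False2: False
          have "d \<bullet> (p u - p v) < 0" using fx False by (simp add: inner_diff_right)
          then have l: "(d \<bullet> (p u - p v)) * cr \<ge> 0" using True by (simp add: mult_nonpos_nonpos)
          have dq: "d \<bullet> q \<ge> 0" unfolding q_def using False2 by (simp add: inner_diff_right)
          have "orient (p y) (p v) (p u) * (d \<bullet> Pv) > 0" using Oyvu dP by simp
          moreover have "orient (p u) (p x) (p v) * (d \<bullet> q) \<ge> 0" using Ox dq by simp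
          ultimately have "- orient (p y) (p v) (p u) * (d \<bullet> Pv) - orient (p u) (p x) (p v) * (d \<bullet> q) < 0"
            by linarith
          then show ?thesis using l id_case1[of d "p u" "p v" "p x" "p y"] unfolding cr_def Pv_def q_def
            by linarith
        qed
      qed
    qed
    have "good n p Q g g" unfolding good_def using Qsub ng gg prp by auto
    then show ?thesis unfolding Q_def by blast
  next
    case False
    then have crp: "cr > 0" by simp
    define s0 where "s0 = cr2 (p v - p u) q / cr"
    define t0 where "t0 = cr2 Pv (p v - p u) / cr"
    have s0p: "s0 > 0" unfolding s0_def q_def using id_s0[of "p v" "p u" "p y"] Oy crp by simp
    have t0p: "t0 > 0" unfolding t0_def using OxCr Ox crp by simp
    define X where "X = p u + s0 *\<^sub>R Pv"
    have dec: "p v - p u = s0 *\<^sub>R Pv + t0 *\<^sub>R q"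
      using decomp2[of Pv q "p v - p u"] crp unfolding s0_def t0_def cr_def by simp
    have XU: "X - p u = s0 *\<^sub>R Pv" unfolding X_def by simp
    have XV: "X - p v = t0 *\<^sub>R (p y - p v)"
    proof -
      have "X - p v = s0 *\<^sub>R Pv - (p v - p u)" unfolding X_def by (simp add: algebra_simps)
      also have "\<dots> = - t0 *\<^sub>R q" using dec by simp
      finally show ?thesis unfolding q_def by (simp add: algebra_simps)
    qed
    have D: "cr2 (X - p u) (p v - p u) > 0" using XU cr2_scale OxCr Ox s0p by simp
    have tri: "norm (p k - p u) \<le> max (norm (X - p u)) (norm (p v - p u))"
              "norm (p k - p v) \<le> max (norm (X - p v)) (norm (p u - p v))" if "k \<in> Q" for k
    proof -
      have l: "cr2 (p k - p u) (p v - p u) \<ge> 0" using OuAv[OF that] by (simp add: orient_cr)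
      have m: "cr2 (X - p u) (p k - p u) \<ge> 0" using XU cr2_scale OxA[OF that] s0p
        unfolding Pv_def by (simp add: orient_cr)
      have "X - p k = (p v - p k) + t0 *\<^sub>R (p y - p v)" using XV by (simp add: algebra_simps)
      then have "cr2 (X - p k) (p v - p k) = t0 * orient (p y) (p v) (p k)" using id_k by metis
      then have k: "cr2 (X - p k) (p v - p k) \<ge> 0" using OyA[OF that] t0p by simp
      show "norm (p k - p u) \<le> max (norm (X - p u)) (norm (p v - p u))"
           "norm (p k - p v) \<le> max (norm (X - p v)) (norm (p u - p v))"
        using tri_bound[OF D l m k] by auto
    qed
    define c where "c = norm (p u - p v)"
    have c1: "c \<le> 1" "c \<ge> 0" using cuv unfolding c_def by (auto simp: dist_norm)
    have cvu: "norm (p v - p u) = c" unfolding c_def by (simp add: norm_minus_commute)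
    define A where "A = norm (X - p u)"
    define B where "B = norm (X - p v)"
    have A1: "A > 1"
    proof -
      have "norm (p a - p u) > 1" using a(2) by (simp add: dist_norm)
      moreover have "norm (p a - p u) \<le> norm (X - p u) \<or> norm (p a - p u) \<le> c"
        using tri(1)[OF \<open>a \<in> Q\<close>] cvu by (simp add: le_max_iff_disj)
      ultimately show ?thesis using c1 unfolding A_def by linarith
    qed
    have "b \<in> Q" using b(1) Q_def by simp
    have B1: "B > 1"
    proof -
      have "norm (p b - p v) > 1" using b(2) by (simp add: dist_norm)
      moreover have "norm (p b - p v) \<le> norm (X - p v) \<or> norm (p b - p v) \<le> c"
        using tri(2)[OF \<open>b \<in> Q\<close>] unfolding c_def by (simp add: le_max_iff_disj)
      ultimately show ?thesis using c1 unfolding B_def by linarith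
    qed
    define g where "g = (1 / A) *\<^sub>R (X - p u)"
    define h where "h = (1 / B) *\<^sub>R (X - p v)"
    have "A > 0" using A1 by simp
    then have ng: "norm g = 1" unfolding g_def A_def by simp
    have "B > 0" using B1 by simp
    then have nh: "norm h = 1" unfolding h_def B_def by simp
    have ip: "2 * ((X - p u) \<bullet> (X - p v)) = A^2 + B^2 - c^2"
    proof -
      have "(X - p v) - (X - p u) = p u - p v" by simp
      then have "c^2 = (norm ((X - p v) - (X - p u)))^2" unfolding c_def by simp
      also have "\<dots> = B^2 + A^2 - 2 * ((X - p u) \<bullet> (X - p v))"
        unfolding A_def B_def by (rule norm_diff_sq)
      finally show ?thesis by simp
    qed
    have AB: "A * B > 1" using A1 B1 by (metis less_1_mult)
    have c2: "c^2 \<le> 1" using c1 by (simp add: power_le_one)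
    have sq: "A^2 + B^2 \<ge> 2 * (A * B)"
    proof -
      have "0 \<le> (A - B)^2" by simp
      then show ?thesis by (simp add: power2_eq_square algebra_simps)
    qed
    have num: "A^2 + B^2 - c^2 > A * B" using AB c2 sq by linarith
    have "g \<bullet> h = ((X - p u) \<bullet> (X - p v)) / (A * B)" unfolding g_def h_def by simp
    also have "\<dots> = ((A^2 + B^2 - c^2) / 2) / (A * B)" using ip by (simp add: eq_divide_eq)
    also have "\<dots> = (A^2 + B^2 - c^2) / (2 * (A * B))" by (simp add: divide_divide_eq_left)
    finally have gh: "g \<bullet> h > 1/2" using num AB by (simp add: field_simps)
    have prp: "\<exists>z\<in>Q. \<forall>w. w < n \<longrightarrow> w \<notin> Q \<longrightarrow> d \<bullet> p w < d \<bullet> p z"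
      if "d \<bullet> g > 0" "d \<bullet> h > 0" for d
    proof -
      have "d \<bullet> (X - p u) > 0" using that(1) A1 unfolding g_def by (simp add: zero_less_mult_iff zero_less_divide_iff)
      then have "s0 * (d \<bullet> Pv) > 0" using XU by simp
      then have "d \<bullet> Pv > 0" using s0p by (simp add: zero_less_mult_iff zero_less_divide_iff)
      then have fx: "d \<bullet> p x > d \<bullet> p u" unfolding Pv_def by (simp add: inner_diff_right)
      have "d \<bullet> (X - p v) > 0" using that(2) B1 unfolding h_def by (simp add: zero_less_mult_iff zero_less_divide_iff)
      then have "t0 * (d \<bullet> (p y - p v)) > 0" using XV by simp
      then have "d \<bullet> (p y - p v) > 0" using t0p by (simp add: zero_less_mult_iff zero_less_divide_iff)
      then have fy: "d \<bullet> p y > d \<bullet> p v" by (simp add: inner_diff_right)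
      show ?thesis
      proof (cases "d \<bullet> p x \<ge> d \<bullet> p y")
        case True then show ?thesis using fin[OF xQ] fx fy by force
      next
        case False then show ?thesis using fin[OF yQ] fx fy by force
      qed
    qed
    have "good n p Q g h" unfolding good_def using Qsub ng nh gh prp by auto
    then show ?thesis unfolding Q_def by blast
  qed
qed

lemma P_iff: "x < n \<Longrightarrow> y < n \<Longrightarrow> k \<in> cyc_open n x y \<longleftrightarrow> k < n \<and> 0 < off n x k \<and> off n x k < off n x y"
  using cyc_open_eq by blast

lemma off_split: "x < n \<Longrightarrow> y < n \<Longrightarrow> z < n \<Longrightarrow>
   off n x z = off n x y + off n y z \<or> off n x z + n = off n x y + off n y z"
  by (simp add: off_eq; linarith)

lemma off_sym: "x < n \<Longrightarrow> y < n \<Longrightarrow> x \<noteq> y \<Longrightarrow> off n x y + off n y x = n"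
  by (simp add: off_eq; linarith)

lemma off_pos: "x < n \<Longrightarrow> y < n \<Longrightarrow> x \<noteq> y \<Longrightarrow> 0 < off n x y"
  using off_0_iff by blast

lemma T1: assumes "x < n" "y < n" "k < n" "x \<noteq> y"
  shows "k = x \<or> k = y \<or> k \<in> cyc_open n x y \<or> k \<in> cyc_open n y x"
proof (rule ccontr)
  assume c: "\<not> ?thesis"
  then have "k \<noteq> x" "k \<noteq> y" by auto
  then have p: "0 < off n x k" "off n x k \<noteq> off n x y" using off_pos off_inj assms by metis+
  have l: "off n y k < n" "off n x k < n" using off_lt assms by auto
  have s: "off n x y + off n y x = n" using off_sym assms by auto
  have d: "off n y k = off n y x + off n x k \<or> off n y k + n = off n y x + off n x k"
    using off_split assms by blast
  have "0 < off n y k" using off_pos assms \<open>k \<noteq> y\<close> by metis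
  then show False using c p l s d unfolding P_iff[OF assms(1,2)] P_iff[OF assms(2,1)] using assms
    by (elim disjE; linarith)
qed

lemma T2: assumes "x < n" "y < n"
  shows "cyc_open n x y \<inter> cyc_open n y x = {}"
proof -
  have False if "k \<in> cyc_open n x y" "k \<in> cyc_open n y x" for k
  proof (cases "x = y")
    case True
    have "off n x x = 0" using assms by (simp add: off_eq)
    then show False using that P_iff[OF assms(1,2)] True by auto
  next
    case False
    have k: "k < n" using that P_iff assms by blast
    have l: "off n y k < n" "off n x k < n" using off_lt assms k by auto
    have s: "off n x y + off n y x = n" using off_sym assms False by auto
    have d: "off n y k = off n y x + off n x k \<or> off n y k + n = off n y x + off n x k"
      using off_split assms k by blast
    show False using that l s d unfolding P_iff[OF assms(1,2)] P_iff[OF assms(2,1)]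
      by (elim disjE; linarith)
  qed
  then show ?thesis by blast
qed

lemma T2e: assumes "x < n" "y < n"
  shows "x \<notin> cyc_open n x y" "y \<notin> cyc_open n x y"
  using assms unfolding P_iff[OF assms(1,2)] by (auto simp add: off_eq)

lemma T3: assumes "x < n" "y < n" "a \<in> cyc_open n x y" "b \<in> cyc_open n y x"
  shows "ccw4 n x a y b"
proof (cases "x = y")
  case True
  have "off n x x = 0" using assms by (simp add: off_eq)
  then show ?thesis using assms(3) P_iff[OF assms(1,2)] True by auto
next
  case False
  have ab: "a < n" "b < n" using assms P_iff by blast+
  have l: "off n y b < n" "off n x b < n" using off_lt assms ab by auto
  have s: "off n x y + off n y x = n" using off_sym assms False by auto
  have d: "off n x b = off n x y + off n y b \<or> off n x b + n = off n x y + off n y b"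
    using off_split assms ab by blast
  show ?thesis using assms(3,4) l s d ab assms(1,2) unfolding P_iff[OF assms(1,2)] P_iff[OF assms(2,1)] ccw4_def
    by (elim disjE; linarith)
qed

lemma memb: assumes "ccw4 n a b c d"
  shows "b \<in> cyc_open n a c" "d \<in> cyc_open n c a"
proof -
  have n: "a < n" "b < n" "c < n" "d < n" using assms unfolding ccw4_def by auto
  show "b \<in> cyc_open n a c" using assms n unfolding P_iff[OF n(1,3)] ccw4_def by auto
  have "ccw4 n c d a b" using ccw4_rot assms by blast
  then show "d \<in> cyc_open n c a" using n unfolding P_iff[OF n(3,1)] ccw4_def by auto
qed

lemma N1_aux: assumes "x < n" "y < n" "a \<in> cyc_open n x y" "b \<in> cyc_open n x y" "off n x a < off n x b"
  shows "cyc_open n a b \<subseteq> cyc_open n x y"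
proof
  fix k assume kk: "k \<in> cyc_open n a b"
  have ab: "a < n" "b < n" using assms(3,4) P_iff[OF assms(1,2)] by auto
  have k: "k < n" using kk P_iff ab by blast
  have oa: "0 < off n x a" "off n x a < off n x y" "0 < off n x b" "off n x b < off n x y"
    using assms(3,4) P_iff[OF assms(1,2)] by auto
  have l: "off n a b < n" "off n x k < n" "off n x b < n" using off_lt assms ab k by auto
  have d1: "off n x k = off n x a + off n a k \<or> off n x k + n = off n x a + off n a k"
    using off_split assms ab k by blast
  have d2: "off n x b = off n x a + off n a b \<or> off n x b + n = off n x a + off n a b"
    using off_split assms ab k by blast
  have ka: "0 < off n a k" "off n a k < off n a b" using kk P_iff[OF ab] by auto
  from d2 have e2: "off n x b = off n x a + off n a b" using assms(5) l by linarith
  from d1 have e1: "off n x k = off n x a + off n a k" using e2 ka oa l by linarith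
  have "0 < off n x k" "off n x k < off n x y" using e1 e2 ka oa by linarith+
  then show "k \<in> cyc_open n x y" using k P_iff[OF assms(1,2)] by blast
qed

lemma N1: assumes "x < n" "y < n" "a \<in> cyc_open n x y" "b \<in> cyc_open n x y" "a \<noteq> b"
  shows "cyc_open n a b \<subseteq> cyc_open n x y \<or> cyc_open n b a \<subseteq> cyc_open n x y"
proof -
  have ab: "a < n" "b < n" using assms(3,4) P_iff[OF assms(1,2)] by auto
  from this have "off n x a \<noteq> off n x b" using assms(5) off_inj[of x n a b] ab assms(1) by metis
  show ?thesis
  proof (cases "off n x a < off n x b")
    case True
    from N1_aux[OF assms(1-4) True] show ?thesis by blast
  next
    case False
    then have "off n x b < off n x a" using \<open>off n x a \<noteq> off n x b\<close> by linarith
    from N1_aux[OF assms(1,2,4,3) this] show ?thesis by blast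
  qed
qed

lemma Sub: assumes "i < n" "j < n" "s < n" "e < n"
  and "i \<notin> cyc_closed n s e" "j \<notin> cyc_closed n s e" "z \<in> cyc_closed n s e" "z \<in> cyc_open n i j"
  shows "cyc_closed n s e \<subseteq> cyc_open n i j"
proof
  fix k assume kA: "k \<in> cyc_closed n s e"
  have Ae: "cyc_closed n s e = {k. k < n \<and> off n s k \<le> off n s e}" by (rule cyc_closed_eq[OF assms(3,4)])
  have k: "k < n" and f1: "off n s k \<le> off n s e" using kA Ae by auto
  have z: "z < n" and f2: "off n s z \<le> off n s e" using assms(7) Ae by auto
  have f3: "\<not> off n s i \<le> off n s e" using assms(5) Ae assms(1) by auto
  have f4: "\<not> off n s j \<le> off n s e" using assms(6) Ae assms(2) by auto
  have "off n s s = 0" using assms(3) by (simp add: off_eq)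
  then have si: "s \<noteq> i" using f3 by auto
  have s: "off n s i + off n i s = n" using off_sym assms si by auto
  have l: "off n s j < n" "off n i k < n" "off n i j < n" "off n i z < n" using off_lt assms z k by auto
  have ps: "0 < off n i s" using off_pos assms si by metis
  have d1: "off n i k = off n i s + off n s k \<or> off n i k + n = off n i s + off n s k"
    using off_split assms k by blast
  have d2: "off n i z = off n i s + off n s z \<or> off n i z + n = off n i s + off n s z"
    using off_split assms z by blast
  have d3: "off n i j = off n i s + off n s j \<or> off n i j + n = off n i s + off n s j"
    using off_split assms by blast
  have g: "0 < off n i z" "off n i z < off n i j" using assms(8) P_iff[OF assms(1,2)] by auto
  from d1 have e1: "off n i k = off n i s + off n s k" using f1 f3 s l by linarith
  from d2 have e2: "off n i z = off n i s + off n s z" using f2 f3 s l by linarith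
  from d3 have e3: "off n i j = off n i s + off n s j" using l e2 g by linarith
  have "0 < off n i k" "off n i k < off n i j" using e1 e3 f1 f4 ps by linarith+
  then show "k \<in> cyc_open n i j" using k P_iff[OF assms(1,2)] by blast
qed

definition fat :: "nat \<Rightarrow> (nat \<Rightarrow> real^2) \<Rightarrow> nat \<Rightarrow> nat \<Rightarrow> bool" where
  "fat n p u v \<longleftrightarrow> u < n \<and> v < n \<and> u \<noteq> v \<and> dist (p u) (p v) \<le> 1 \<and>
     (\<exists>a\<in>cyc_open n u v. dist (p a) (p u) > 1) \<and> (\<exists>b\<in>cyc_open n u v. dist (p b) (p v) > 1)"

lemma fat_good: assumes "convex_ccw n p" "fat n p u v" shows "\<exists>g h. good n p (cyc_open n u v) g h"
  using assms(2) cap_good[OF assms(1)] unfolding fat_def by blast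

lemma no_three: assumes P: "convex_ccw n p" and f: "fat n p u1 v1" "fat n p u2 v2" "fat n p u3 v3"
  and d: "cyc_open n u1 v1 \<inter> cyc_open n u2 v2 = {}" "cyc_open n u1 v1 \<inter> cyc_open n u3 v3 = {}"
     "cyc_open n u2 v2 \<inter> cyc_open n u3 v3 = {}"
  shows False
proof -
  obtain g1 h1 where 1: "good n p (cyc_open n u1 v1) g1 h1" using fat_good[OF P f(1)] by blast
  obtain g2 h2 where 2: "good n p (cyc_open n u2 v2) g2 h2" using fat_good[OF P f(2)] by blast
  obtain g3 h3 where 3: "good n p (cyc_open n u3 v3) g3 h3" using fat_good[OF P f(3)] by blast
  show False using three_conflict[OF 1 2 3 d] .
qed

locale lm =
  fixes n :: nat and p :: "nat \<Rightarrow> real^2" and w :: "nat \<Rightarrow> real"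
    and S :: "nat set" and AA :: "nat set set" and ph :: "nat set \<Rightarrow> nat"
  assumes P: "convex_ccw n p"
    and wpos: "\<forall>k<n. w k > 0"
    and opt: "optimal_dominating n p w S"
    and asg: "assignment n p S AA ph"
    and c1: "line_separable p S AA ph"
    and c2: "\<forall>c\<in>S. n_assigned AA ph c \<le> 2 \<and> (\<exists>A\<in>AA. ph A = c \<and> c \<in> A)"
    and c3: "\<forall>i\<in>S. \<forall>B\<in>AA. ph B = i \<and> i \<notin> B \<longrightarrow>
               (\<exists>t\<in>B. \<exists>q1\<in>S. \<exists>q2\<in>S. q1 \<in> cyc_open n i t \<and> q2 \<in> cyc_open n t i \<and>
                  dist (p t) (p q1) > 1 \<and> dist (p t) (p q2) > 1)"
begin

abbreviation G where "G x \<equiv> group_of AA ph x"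

lemma Sn: "S \<subseteq> {..<n}" using opt unfolding optimal_dominating_def dominating_def by auto

lemma Aun: "\<Union>AA = {..<n}" using asg unfolding assignment_def cyc_partition_def by auto
lemma Adisj: "A \<in> AA \<Longrightarrow> B \<in> AA \<Longrightarrow> A \<noteq> B \<Longrightarrow> A \<inter> B = {}"
  using asg unfolding assignment_def cyc_partition_def by auto
lemma Asub: "A \<in> AA \<Longrightarrow> sublist_idx n A"
  using asg unfolding assignment_def cyc_partition_def by auto
lemma Aph: "A \<in> AA \<Longrightarrow> ph A \<in> S" "A \<in> AA \<Longrightarrow> k \<in> A \<Longrightarrow> dist (p k) (p (ph A)) \<le> 1"
  using asg unfolding assignment_def by auto
lemma finA: "finite AA"
proof -
  have "AA \<subseteq> Pow {..<n}" using Aun by auto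
  then show ?thesis using finite_subset by blast
qed

lemma memG: "k \<in> G x \<longleftrightarrow> (\<exists>A\<in>AA. ph A = x \<and> k \<in> A)"
  unfolding group_of_def by auto

lemma Gdisj: "x \<noteq> y \<Longrightarrow> k \<in> G x \<Longrightarrow> k \<in> G y \<Longrightarrow> False"
  unfolding memG using Adisj by blast

lemma Gn: "k \<in> G x \<Longrightarrow> k < n" unfolding memG using Aun by blast

lemma own: "x \<in> S \<Longrightarrow> x \<in> G x" unfolding memG using c2 by blast

lemma nc: assumes "x \<in> S" "y \<in> S" "x \<noteq> y" "ccw4 n a b c d" "a \<in> G x" "c \<in> G x" "b \<in> G y" "d \<in> G y"
  shows False
proof -
  obtain e :: "real^2" and be where
    sep: "((\<forall>k\<in>G x. e \<bullet> p k \<le> be) \<and> (\<forall>k\<in>G y. e \<bullet> p k > be)) \<or>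
          ((\<forall>k\<in>G y. e \<bullet> p k \<le> be) \<and> (\<forall>k\<in>G x. e \<bullet> p k > be))"
    using c1 assms(1-3) unfolding line_separable_def by blast
  then show False
  proof
    assume h: "(\<forall>k\<in>G x. e \<bullet> p k \<le> be) \<and> (\<forall>k\<in>G y. e \<bullet> p k > be)"
    then have "e \<bullet> p a \<le> be" "e \<bullet> p c \<le> be" "e \<bullet> p b > be" "e \<bullet> p d > be" using assms(5-8) by blast+
    then have "max (e \<bullet> p a) (e \<bullet> p c) < min (e \<bullet> p b) (e \<bullet> p d)" by simp
    then show False using X4[OF P assms(4)] by blast
  next
    assume h: "(\<forall>k\<in>G y. e \<bullet> p k \<le> be) \<and> (\<forall>k\<in>G x. e \<bullet> p k > be)"
    then have "e \<bullet> p a > be" "e \<bullet> p c > be" "e \<bullet> p b \<le> be" "e \<bullet> p d \<le> be" using assms(5-8) by blast+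
    then have "max (e \<bullet> p b) (e \<bullet> p d) < min (e \<bullet> p c) (e \<bullet> p a)" by simp
    then show False using X4[OF P ccw4_rot[OF assms(4)]] by blast
  qed
qed

lemma priv: assumes "q \<in> S" shows "\<exists>r<n. r \<in> G q \<and> (\<forall>s\<in>S. s \<noteq> q \<longrightarrow> dist (p r) (p s) > 1)"
proof -
  have fS: "finite S" using Sn finite_subset by blast
  have qn: "q < n" using Sn assms by auto
  have nd: "\<not> dominating n p (S - {q})"
  proof
    assume "dominating n p (S - {q})"
    then have "sum w S \<le> sum w (S - {q})" using opt unfolding optimal_dominating_def by blast
    moreover have "sum w S = w q + sum w (S - {q})" by (rule sum.remove[OF fS assms])
    moreover have "w q > 0" using wpos qn by auto
    ultimately show False by linarith
  qed
  have "S - {q} \<subseteq> {..<n}" using Sn by auto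
  then have "\<not> (\<forall>k<n. k \<in> S - {q} \<or> (\<exists>s\<in>S - {q}. dist (p k) (p s) \<le> 1))"
    using nd unfolding dominating_def by blast
  then obtain r where r: "r < n" "\<not> (r \<in> S - {q} \<or> (\<exists>s\<in>S - {q}. dist (p r) (p s) \<le> 1))"
    by blast
  obtain A where A: "A \<in> AA" "r \<in> A" using Aun r(1) by blast
  have phA: "ph A \<in> S" "dist (p r) (p (ph A)) \<le> 1" using Aph A by auto
  have "ph A = q"
  proof (rule ccontr)
    assume "ph A \<noteq> q"
    then have "ph A \<in> S - {q}" using phA by blast
    then show False using r(2) phA(2) by blast
  qed
  then have "r \<in> G q" using A memG by blast
  moreover have "dist (p r) (p s) > 1" if "s \<in> S" "s \<noteq> q" for s
  proof -
    have "s \<in> S - {q}" using that by blast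
    then show ?thesis using r(2) by force
  qed
  ultimately show ?thesis using r(1) by blast
qed

lemma NA: assumes "x \<in> S" shows "1 \<le> n_assigned AA ph x" "n_assigned AA ph x \<le> 2"
proof -
  have "finite {A\<in>AA. ph A = x}" using finA by simp
  moreover have "{A\<in>AA. ph A = x} \<noteq> {}" using c2 assms by blast
  ultimately show "1 \<le> n_assigned AA ph x" unfolding n_assigned_def
    by (simp add: Suc_le_eq card_gt_0_iff)
  show "n_assigned AA ph x \<le> 2" using c2 assms by blast
qed

definition C2 :: "nat set" where "C2 = {c\<in>S. n_assigned AA ph c = 2}"

definition Tprop :: "nat \<Rightarrow> nat \<Rightarrow> bool" where
  "Tprop c t \<longleftrightarrow> (\<exists>al be. al \<in> AA \<and> be \<in> AA \<and> al \<noteq> be \<and> ph al = c \<and> ph be = c \<and> c \<in> al \<and> c \<notin> be \<and> t \<in> be \<and>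
     {A\<in>AA. ph A = c} = {al, be} \<and>
     (\<exists>q1\<in>S. \<exists>q2\<in>S. q1 \<in> cyc_open n c t \<and> q2 \<in> cyc_open n t c \<and> dist (p t) (p q1) > 1 \<and> dist (p t) (p q2) > 1))"

lemma Tex: assumes "c \<in> C2" shows "\<exists>t. Tprop c t"
proof -
  have cS: "c \<in> S" and "card {A\<in>AA. ph A = c} = 2" using assms unfolding C2_def n_assigned_def by auto
  then obtain A1 A2 where A12: "{A\<in>AA. ph A = c} = {A1, A2}" "A1 \<noteq> A2" by (meson card_2_iff)
  obtain al where al: "al \<in> AA" "ph al = c" "c \<in> al" using c2 cS by blast
  then have "al \<in> {A1, A2}" using A12 by blast
  then obtain be where be: "{A\<in>AA. ph A = c} = {al, be}" "al \<noteq> be" using A12 by blast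
  then have beA: "be \<in> AA" "ph be = c" by blast+
  have "c \<notin> be" using Adisj[OF al(1) beA(1) be(2)] al(3) by blast
  then obtain t where t: "t \<in> be" "\<exists>q1\<in>S. \<exists>q2\<in>S. q1 \<in> cyc_open n c t \<and> q2 \<in> cyc_open n t c \<and>
     dist (p t) (p q1) > 1 \<and> dist (p t) (p q2) > 1"
    using c3 cS beA by blast
  show ?thesis unfolding Tprop_def using al beA be t \<open>c \<notin> be\<close> by blast
qed

definition T :: "nat \<Rightarrow> nat" where "T c = (SOME t. Tprop c t)"

lemma TT: "c \<in> C2 \<Longrightarrow> Tprop c (T c)"
  unfolding T_def using Tex someI_ex by metis

lemma ch: assumes "c \<in> C2"
  shows "c \<in> S" "c < n" "T c < n" "c \<in> G c" "T c \<in> G c" "T c \<noteq> c" "dist (p c) (p (T c)) \<le> 1"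
proof -
  show cS: "c \<in> S" using assms C2_def by auto
  then show "c < n" using Sn by auto
  show "c \<in> G c" using own cS by blast
  obtain be where be: "be \<in> AA" "ph be = c" "c \<notin> be" "T c \<in> be" using TT[OF assms] unfolding Tprop_def by blast
  show "T c \<in> G c" using be memG by blast
  then show "T c < n" using Gn by blast
  show "T c \<noteq> c" using be(3,4) by auto
  have "dist (p (T c)) (p c) \<le> 1" using Aph(2)[OF be(1) be(4)] be(2) by simp
  then show "dist (p c) (p (T c)) \<le> 1" by (simp add: dist_commute)
qed

lemma cen: assumes "c \<in> C2"
  shows "\<exists>q1\<in>S. \<exists>q2\<in>S. q1 \<in> cyc_open n c (T c) \<and> q2 \<in> cyc_open n (T c) c \<and> dist (p (T c)) (p q1) > 1 \<and> dist (p (T c)) (p q2) > 1"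
  using TT[OF assms] unfolding Tprop_def by blast

lemma far: assumes "c \<in> S" "u \<in> G c" "v \<in> G c" "u \<noteq> v" "q \<in> S" "q \<noteq> c" "q \<in> cyc_open n u v"
  shows "\<exists>r\<in>cyc_open n u v. dist (p r) (p c) > 1"
proof -
  obtain r where r: "r < n" "r \<in> G q" "\<forall>s\<in>S. s \<noteq> q \<longrightarrow> dist (p r) (p s) > 1" using priv assms(5) by blast
  have rc: "dist (p r) (p c) > 1" using r(3) assms(1,6) by auto
  have un: "u < n" "v < n" using assms(2,3) Gn by auto
  have "r \<noteq> u" using Gdisj[of c q u] assms r by blast
  moreover have "r \<noteq> v" using Gdisj[of c q v] assms r by blast
  moreover have "r \<notin> cyc_open n v u"
  proof
    assume "r \<in> cyc_open n v u"
    then have "ccw4 n u q v r" using T3[OF un assms(7)] by blast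
    then show False using nc[OF assms(1,5) assms(6)[symmetric]] assms(2,3) own[OF assms(5)] r(2) by blast
  qed
  ultimately have "r \<in> cyc_open n u v" using T1[OF un r(1) assms(4)] by blast
  then show ?thesis using rc by blast
qed

lemma fat_ch: assumes "c \<in> C2" shows "fat n p c (T c)" "fat n p (T c) c"
proof -
  note h = ch[OF assms]
  obtain q1 q2 where q: "q1 \<in> S" "q2 \<in> S" "q1 \<in> cyc_open n c (T c)" "q2 \<in> cyc_open n (T c) c"
    "dist (p (T c)) (p q1) > 1" "dist (p (T c)) (p q2) > 1" using cen[OF assms] by blast
  have "q1 \<noteq> c" using q(3) T2e h by blast
  then obtain r1 where r1: "r1 \<in> cyc_open n c (T c)" "dist (p r1) (p c) > 1"
    using far[OF h(1) h(4) h(5) h(6)[symmetric] q(1) _ q(3)] by blast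
  have "q2 \<noteq> c" using q(4) T2e h by blast
  then obtain r2 where r2: "r2 \<in> cyc_open n (T c) c" "dist (p r2) (p c) > 1"
    using far[OF h(1) h(5) h(4) h(6) q(2) _ q(4)] by blast
  show "fat n p c (T c)" unfolding fat_def using h r1 q(3,5) by (auto simp: dist_commute)
  show "fat n p (T c) c" unfolding fat_def using h r2 q(4,6) by (auto simp: dist_commute)
qed

definition chord :: "nat \<Rightarrow> nat \<Rightarrow> nat \<Rightarrow> bool" where
  "chord c x y \<longleftrightarrow> c \<in> C2 \<and> ((x = c \<and> y = T c) \<or> (x = T c \<and> y = c))"

lemma chord_facts: assumes "chord c x y"
  shows "c \<in> C2" "x < n" "y < n" "x \<noteq> y" "x \<in> G c" "y \<in> G c" "fat n p x y" "\<exists>q\<in>S. q \<in> cyc_open n x y"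
    "chord c y x"
proof -
  show cC: "c \<in> C2" using assms chord_def by auto
  note h = ch[OF cC]
  have xy: "(x = c \<and> y = T c) \<or> (x = T c \<and> y = c)" using assms chord_def by auto
  show "x < n" "y < n" "x \<noteq> y" "x \<in> G c" "y \<in> G c" using xy h by auto
  show "fat n p x y" using xy fat_ch[OF cC] by auto
  show "\<exists>q\<in>S. q \<in> cyc_open n x y" using xy cen[OF cC] by auto
  show "chord c y x" using assms unfolding chord_def by auto
qed

lemma NCc: assumes "chord c x y" "chord d x' y'" "c \<noteq> d"
  shows "(x' \<in> cyc_open n x y \<and> y' \<in> cyc_open n x y) \<or> (x' \<in> cyc_open n y x \<and> y' \<in> cyc_open n y x)"
proof -
  note a = chord_facts[OF assms(1)] and b = chord_facts[OF assms(2)]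
  have cS: "c \<in> S" "d \<in> S" using a(1) b(1) ch by auto
  have "x' \<noteq> x" "x' \<noteq> y" "y' \<noteq> x" "y' \<noteq> y" using Gdisj assms(3) a(5,6) b(5,6) by metis+
  then have x': "x' \<in> cyc_open n x y \<or> x' \<in> cyc_open n y x" and y': "y' \<in> cyc_open n x y \<or> y' \<in> cyc_open n y x"
    using T1[OF a(2,3) _ a(4)] b(2,3) by blast+
  have 1: False if "x' \<in> cyc_open n x y" "y' \<in> cyc_open n y x"
  proof -
    have "ccw4 n x x' y y'" using T3[OF a(2,3) that] .
    then show False using nc[OF cS assms(3)] a(5,6) b(5,6) by blast
  qed
  have 2: False if "y' \<in> cyc_open n x y" "x' \<in> cyc_open n y x"
  proof -
    have "ccw4 n x y' y x'" using T3[OF a(2,3) that] .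
    then show False using nc[OF cS assms(3)] a(5,6) b(5,6) by blast
  qed
  show ?thesis using x' y' 1 2 by blast
qed

lemma finP: "finite (cyc_open n x y)"
proof -
  have "cyc_open n x y \<subseteq> (\<lambda>m. (x + m) mod n) ` {..< (y + n - x) mod n}" unfolding cyc_open_def by auto
  then show ?thesis using finite_subset by blast
qed

lemma nest: assumes "chord c x y" "chord d x' y'" "c \<noteq> d" "x' \<in> cyc_open n x y" "y' \<in> cyc_open n x y"
  shows "\<exists>u v. chord d u v \<and> cyc_open n u v \<subseteq> cyc_open n x y \<and> card (cyc_open n u v) < card (cyc_open n x y)"
proof -
  note a = chord_facts[OF assms(1)] and b = chord_facts[OF assms(2)]
  have "cyc_open n x' y' \<subseteq> cyc_open n x y \<or> cyc_open n y' x' \<subseteq> cyc_open n x y"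
    using N1[OF a(2,3) assms(4,5) b(4)] .
  then show ?thesis
  proof
    assume s: "cyc_open n x' y' \<subseteq> cyc_open n x y"
    have "x' \<notin> cyc_open n x' y'" using T2e b by blast
    then have "cyc_open n x' y' \<subset> cyc_open n x y" using s assms(4) by blast
    then have "card (cyc_open n x' y') < card (cyc_open n x y)" using psubset_card_mono finP by blast
    then show ?thesis using s assms(2) by blast
  next
    assume s: "cyc_open n y' x' \<subseteq> cyc_open n x y"
    have "y' \<notin> cyc_open n y' x'" using T2e b by blast
    then have "cyc_open n y' x' \<subset> cyc_open n x y" using s assms(5) by blast
    then have "card (cyc_open n y' x') < card (cyc_open n x y)" using psubset_card_mono finP by blast
    then show ?thesis using s b(9) by blast
  qed
qed

lemma chord_i: assumes "i \<in> S" "i \<notin> C2" "chord c x y" shows "i \<noteq> x" "i \<noteq> y"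
proof -
  note a = chord_facts[OF assms(3)]
  have "i \<noteq> c" using assms(2) a(1) by blast
  then show "i \<noteq> x" "i \<noteq> y" using Gdisj[of i c] own[OF assms(1)] a(5,6) by blast+
qed

lemma main: assumes two: "card S \<ge> 2"
  shows "\<exists>i\<in>S. \<exists>j\<in>S. i \<noteq> j \<and> n_assigned AA ph i = 1 \<and> n_assigned AA ph j = 1 \<and>
           (\<forall>c\<in>S. n_assigned AA ph c = 2 \<longrightarrow>
              (\<exists>A\<in>AA. \<exists>B\<in>AA. A \<noteq> B \<and> ph A = c \<and> ph B = c \<and>
                 A \<subseteq> cyc_open n i j \<and> B \<subseteq> cyc_open n j i))"
proof -
  have n1: "n_assigned AA ph x = 1" if "x \<in> S" "x \<notin> C2" for x
    using NA[OF that(1)] that unfolding C2_def by auto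
  show ?thesis
  proof (cases "C2 = {}")
    case True
    have fS: "finite S" using Sn finite_subset by blast
    have "S \<noteq> {}" using two by auto
    then obtain i where i: "i \<in> S" by blast
    have "card (S - {i}) \<ge> 1" using two i fS by simp
    then have "S - {i} \<noteq> {}" by (metis card.empty not_one_le_zero)
    then obtain j where j: "j \<in> S" "j \<noteq> i" by blast
    show ?thesis
      apply (rule bexI[OF _ i], rule bexI[OF _ j(1)])
      using i j n1 True unfolding C2_def by auto
  next
    case False
    define Arcs where "Arcs = {Q. \<exists>c x y. chord c x y \<and> Q = cyc_open n x y}"
    obtain c00 where "c00 \<in> C2" using False by blast
    then have "chord c00 c00 (T c00)" unfolding chord_def by auto
    then have "cyc_open n c00 (T c00) \<in> Arcs" unfolding Arcs_def by blast
    then have "(\<lambda>Q. Q \<in> Arcs) (arg_min card (\<lambda>Q. Q \<in> Arcs)) \<and> (\<forall>Q. Q \<in> Arcs \<longrightarrow> card (arg_min card (\<lambda>Q. Q \<in> Arcs)) \<le> card Q)"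
      by (rule arg_min_nat_lemma)
    then obtain L where L: "L \<in> Arcs" "\<forall>Q\<in>Arcs. card L \<le> card Q" by blast
    then obtain c0 x0 y0 where c0: "chord c0 x0 y0" "L = cyc_open n x0 y0" unfolding Arcs_def by blast
    note a0 = chord_facts[OF c0(1)]
    have Lmin: False if "chord d u v" "card (cyc_open n u v) < card L" for d u v
      using that L(2) unfolding Arcs_def by force
    obtain i where i: "i \<in> S" "i \<in> L" using a0(8) c0(2) by blast
    have iC: "i \<notin> C2"
    proof
      assume iC2: "i \<in> C2"
      then have chi: "chord i i (T i)" unfolding chord_def by auto
      have "c0 = x0 \<or> c0 = y0" using c0(1) unfolding chord_def by auto
      then have "i \<noteq> c0" using i(2) c0(2) T2e a0(2,3) by blast
      then have "c0 \<noteq> i" by simp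
      have "(i \<in> L \<and> T i \<in> L) \<or> (i \<in> cyc_open n y0 x0 \<and> T i \<in> cyc_open n y0 x0)"
        using NCc[OF c0(1) chi \<open>c0 \<noteq> i\<close>] c0(2) by simp
      then have "i \<in> L" "T i \<in> L" using i(2) T2[OF a0(2,3)] c0(2) by blast+
      then obtain u v where "chord i u v" "card (cyc_open n u v) < card L"
        using nest[OF c0(1) chi \<open>c0 \<noteq> i\<close>] c0(2) by blast
      then show False using Lmin by blast
    qed
    have in1: "n_assigned AA ph i = 1" using n1 i iC by blast
    have ich: "i \<noteq> x" "i \<noteq> y" if "chord c x y" for c x y using chord_i[OF i(1) iC that] by auto
    define F where "F c = (if i \<in> cyc_open n c (T c) then cyc_open n (T c) c else cyc_open n c (T c))" for c
    have Fch: "\<exists>x y. chord c x y \<and> F c = cyc_open n x y \<and> i \<in> cyc_open n y x" if "c \<in> C2" for c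
    proof (cases "i \<in> cyc_open n c (T c)")
      case True
      have "chord c (T c) c" using that unfolding chord_def by auto
      then show ?thesis using True unfolding F_def by auto
    next
      case False
      have ch1: "chord c c (T c)" using that unfolding chord_def by auto
      note f = chord_facts[OF ch1]
      have "i \<in> cyc_open n (T c) c" using T1[OF f(2,3) _ f(4)] i(1) Sn ich[OF ch1] False by blast
      then show ?thesis using False ch1 unfolding F_def by auto
    qed
    have Funiq: "F c = cyc_open n x y" if "chord c x y" "i \<notin> cyc_open n x y" for c x y
    proof -
      note f = chord_facts[OF that(1)]
      have "i < n" using i(1) Sn by auto
      then have "i \<in> cyc_open n y x" using T1[OF f(2,3) _ f(4)] ich[OF that(1)] that(2) by blast
      then have "i \<notin> cyc_open n x y" using T2[OF f(2,3)] by blast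
      have xy: "(x = c \<and> y = T c) \<or> (x = T c \<and> y = c)" using that(1) chord_def by auto
      then show ?thesis using that(2) \<open>i \<in> cyc_open n y x\<close> unfolding F_def by auto
    qed
    have "(\<lambda>c. c \<in> C2) (arg_min (\<lambda>c. card (F c)) (\<lambda>c. c \<in> C2)) \<and> (\<forall>c. c \<in> C2 \<longrightarrow> card (F (arg_min (\<lambda>c. card (F c)) (\<lambda>c. c \<in> C2))) \<le> card (F c))"
      using \<open>c00 \<in> C2\<close> by (rule arg_min_nat_lemma)
    then obtain c1 where c1: "c1 \<in> C2" "\<forall>c\<in>C2. card (F c1) \<le> card (F c)" by blast
    obtain x1 y1 where x1: "chord c1 x1 y1" "F c1 = cyc_open n x1 y1" "i \<in> cyc_open n y1 x1"
      using Fch[OF c1(1)] by blast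
    note a1 = chord_facts[OF x1(1)]
    have iF1: "i \<notin> cyc_open n x1 y1" using x1(3) T2[OF a1(2,3)] by blast
    obtain j where j: "j \<in> S" "j \<in> cyc_open n x1 y1" using a1(8) by blast
    have jC: "j \<notin> C2"
    proof
      assume jC2: "j \<in> C2"
      then have chj: "chord j j (T j)" unfolding chord_def by auto
      have "c1 = x1 \<or> c1 = y1" using x1(1) unfolding chord_def by auto
      then have "c1 \<noteq> j" using j(2) T2e a1(2,3) by blast
      have "(j \<in> cyc_open n x1 y1 \<and> T j \<in> cyc_open n x1 y1) \<or> (j \<in> cyc_open n y1 x1 \<and> T j \<in> cyc_open n y1 x1)"
        using NCc[OF x1(1) chj \<open>c1 \<noteq> j\<close>] by simp
      then have "T j \<in> cyc_open n x1 y1" using j(2) T2[OF a1(2,3)] by blast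
      then obtain u v where uv: "chord j u v" "cyc_open n u v \<subseteq> cyc_open n x1 y1" "card (cyc_open n u v) < card (cyc_open n x1 y1)"
        using nest[OF x1(1) chj \<open>c1 \<noteq> j\<close> j(2)] by blast
      have "i \<notin> cyc_open n u v" using uv(2) iF1 by blast
      then have "F j = cyc_open n u v" using Funiq[OF uv(1)] by blast
      then have "card (F j) < card (F c1)" using uv(3) x1(2) by simp
      then show False using c1(2) jC2 by fastforce
    qed
    have jn1: "n_assigned AA ph j = 1" using n1 j jC by blast
    have ij: "i \<noteq> j" using iF1 j(2) by blast
    have D2: "cyc_open n x y \<inter> L = {}" if ch: "chord c x y" and ii: "i \<in> cyc_open n y x" for c x y
    proof -
      note f = chord_facts[OF ch]
      show ?thesis
      proof (cases "c = c0")
        case True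
        have xy: "(x = c \<and> y = T c) \<or> (x = T c \<and> y = c)" "(x0 = c \<and> y0 = T c) \<or> (x0 = T c \<and> y0 = c)"
          using ch c0(1) True chord_def by auto
        have "i \<notin> cyc_open n x y" using ii T2[OF f(2,3)] by blast
        then have "\<not> (x = x0 \<and> y = y0)" using i(2) c0(2) by auto
        then have "x = y0 \<and> y = x0" using xy by auto
        then show ?thesis using T2[OF a0(2,3)] c0(2) by blast
      next
        case False
        then have "c0 \<noteq> c" by simp
        have "(x \<in> L \<and> y \<in> L) \<or> (x \<in> cyc_open n y0 x0 \<and> y \<in> cyc_open n y0 x0)"
          using NCc[OF c0(1) ch \<open>c0 \<noteq> c\<close>] c0(2) by simp
        then show ?thesis
        proof
          assume "x \<in> L \<and> y \<in> L"
          then obtain u v where "chord c u v" "card (cyc_open n u v) < card L"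
            using nest[OF c0(1) ch \<open>c0 \<noteq> c\<close>] c0(2) by blast
          then show ?thesis using Lmin by blast
        next
          assume h: "x \<in> cyc_open n y0 x0 \<and> y \<in> cyc_open n y0 x0"
          have "cyc_open n x y \<subseteq> cyc_open n y0 x0 \<or> cyc_open n y x \<subseteq> cyc_open n y0 x0"
            using N1[OF a0(3,2)] h f(4) by blast
          moreover have "\<not> cyc_open n y x \<subseteq> cyc_open n y0 x0"
            using ii i(2) c0(2) T2[OF a0(2,3)] by blast
          ultimately show ?thesis using T2[OF a0(2,3)] c0(2) by blast
        qed
      qed
    qed
    have jF: "j \<in> F c" if cC: "c \<in> C2" for c
    proof (rule ccontr)
      assume jn: "j \<notin> F c"
      obtain x y where xy: "chord c x y" "F c = cyc_open n x y" "i \<in> cyc_open n y x" using Fch[OF cC] by blast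
      note f = chord_facts[OF xy(1)]
      have "c \<noteq> c1" using jn j(2) x1(2) xy(2) by auto
      then have "c1 \<noteq> c" by simp
      have D1: "cyc_open n x y \<inter> cyc_open n x1 y1 = {}"
      proof -
        have "(x \<in> cyc_open n x1 y1 \<and> y \<in> cyc_open n x1 y1) \<or> (x \<in> cyc_open n y1 x1 \<and> y \<in> cyc_open n y1 x1)"
          using NCc[OF x1(1) xy(1) \<open>c1 \<noteq> c\<close>] by simp
        then show ?thesis
        proof
          assume h: "x \<in> cyc_open n x1 y1 \<and> y \<in> cyc_open n x1 y1"
          have "cyc_open n x y \<subseteq> cyc_open n x1 y1 \<or> cyc_open n y x \<subseteq> cyc_open n x1 y1"
            using N1[OF a1(2,3)] h f(4) by blast
          moreover have "\<not> cyc_open n y x \<subseteq> cyc_open n x1 y1" using xy(3) iF1 by blast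
          ultimately have s: "cyc_open n x y \<subseteq> cyc_open n x1 y1" by blast
          have "x \<notin> cyc_open n x y" using T2e f by blast
          then have "cyc_open n x y \<subset> cyc_open n x1 y1" using s h by blast
          then have "card (F c) < card (F c1)" using psubset_card_mono finP xy(2) x1(2) by metis
          then show ?thesis using c1(2) cC by fastforce
        next
          assume h: "x \<in> cyc_open n y1 x1 \<and> y \<in> cyc_open n y1 x1"
          have "cyc_open n x y \<subseteq> cyc_open n y1 x1 \<or> cyc_open n y x \<subseteq> cyc_open n y1 x1"
            using N1[OF a1(3,2)] h f(4) by blast
          then show ?thesis
          proof
            assume "cyc_open n x y \<subseteq> cyc_open n y1 x1"
            then show ?thesis using T2[OF a1(2,3)] by blast
          next
            assume s: "cyc_open n y x \<subseteq> cyc_open n y1 x1"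
            have jn2: "j \<notin> cyc_open n y x" using s j(2) T2[OF a1(2,3)] by blast
            have "j \<noteq> x" "j \<noteq> y" using h j(2) T2[OF a1(2,3)] by blast+
            moreover have "j < n" using j(1) Sn by auto
            ultimately have "j \<in> cyc_open n x y" using T1[OF f(2,3) _ f(4)] jn2 by blast
            then show ?thesis using jn xy(2) by blast
          qed
        qed
      qed
      have D3: "cyc_open n x y \<inter> L = {}" using D2[OF xy(1,3)] .
      have D4: "cyc_open n x1 y1 \<inter> L = {}" using D2[OF x1(1,3)] .
      show False using no_three[OF P a0(7) f(7) a1(7)] D1 D3 D4 c0(2) by blast
    qed
    have fin: "\<exists>A\<in>AA. \<exists>B\<in>AA. A \<noteq> B \<and> ph A = c \<and> ph B = c \<and> A \<subseteq> cyc_open n i j \<and> B \<subseteq> cyc_open n j i"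
      if cS: "c \<in> S" "n_assigned AA ph c = 2" for c
    proof -
      have cC: "c \<in> C2" using cS unfolding C2_def by auto
      obtain al be where ab: "al \<in> AA" "be \<in> AA" "al \<noteq> be" "ph al = c" "ph be = c" "c \<in> al" "T c \<in> be"
        using TT[OF cC] unfolding Tprop_def by blast
      obtain x y where xy: "chord c x y" "F c = cyc_open n x y" "i \<in> cyc_open n y x" using Fch[OF cC] by blast
      note f = chord_facts[OF xy(1)]
      have jxy: "j \<in> cyc_open n x y" using jF[OF cC] xy(2) by simp
      have "ccw4 n y i x j" using T3[OF f(3,2) xy(3) jxy] .
      then have "ccw4 n i x j y" using ccw4_rot by blast
      then have xP: "x \<in> cyc_open n i j" and yP: "y \<in> cyc_open n j i" using memb by blast+
      have inn: "i < n" "j < n" using i(1) j(1) Sn by auto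
      have ic: "i \<noteq> c" "j \<noteq> c" using iC jC cC by auto
      have notin: "i \<notin> X" "j \<notin> X" if hh: "X \<in> AA" "ph X = c" for X
      proof -
        show "i \<notin> X"
        proof
          assume "i \<in> X"
          then have "i \<in> G c" using memG hh by blast
          then show False using Gdisj[OF ic(1) own[OF i(1)]] by blast
        qed
        show "j \<notin> X"
        proof
          assume "j \<in> X"
          then have "j \<in> G c" using memG hh by blast
          then show False using Gdisj[OF ic(2) own[OF j(1)]] by blast
        qed
      qed
      have subl: "X \<subseteq> cyc_open n a b" if hh: "X \<in> AA" "a < n" "b < n" "a \<notin> X" "b \<notin> X" "z \<in> X" "z \<in> cyc_open n a b" for X z a b
      proof -
        obtain s e where se: "s < n" "e < n" "X = cyc_closed n s e" using Asub[OF hh(1)] unfolding sublist_idx_def by blast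
        show ?thesis using Sub[OF hh(2,3) se(1,2)] se(3) hh(4-7) by simp
      qed
      note al_ij = subl[OF ab(1) inn(1,2) notin[OF ab(1,4)]] and al_ji = subl[OF ab(1) inn(2,1) notin(2,1)[OF ab(1,4)]]
      note be_ij = subl[OF ab(2) inn(1,2) notin[OF ab(2,5)]] and be_ji = subl[OF ab(2) inn(2,1) notin(2,1)[OF ab(2,5)]]
      have xy2: "(x = c \<and> y = T c) \<or> (x = T c \<and> y = c)" using xy(1) chord_def by auto
      then show ?thesis
      proof
        assume h: "x = c \<and> y = T c"
        have "c \<in> cyc_open n i j" "T c \<in> cyc_open n j i" using xP yP h by auto
        then have "al \<subseteq> cyc_open n i j" "be \<subseteq> cyc_open n j i" using al_ij[OF ab(6)] be_ji[OF ab(7)] by auto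
        then show ?thesis using ab by blast
      next
        assume h: "x = T c \<and> y = c"
        have "T c \<in> cyc_open n i j" "c \<in> cyc_open n j i" using xP yP h by auto
        then have "be \<subseteq> cyc_open n i j" "al \<subseteq> cyc_open n j i" using be_ij[OF ab(7)] al_ji[OF ab(6)] by auto
        then show ?thesis using ab by blast
      qed
    qed
    have allc: "\<forall>c\<in>S. n_assigned AA ph c = 2 \<longrightarrow>
              (\<exists>A\<in>AA. \<exists>B\<in>AA. A \<noteq> B \<and> ph A = c \<and> ph B = c \<and>
                 A \<subseteq> cyc_open n i j \<and> B \<subseteq> cyc_open n j i)"
    proof (intro ballI impI)
      fix c assume "c \<in> S" "n_assigned AA ph c = 2"
      then show "\<exists>A\<in>AA. \<exists>B\<in>AA. A \<noteq> B \<and> ph A = c \<and> ph B = c \<and>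
                 A \<subseteq> cyc_open n i j \<and> B \<subseteq> cyc_open n j i" by (rule fin)
    qed
    show ?thesis
    proof (rule bexI[where x=i])
      show "\<exists>j\<in>S. i \<noteq> j \<and> n_assigned AA ph i = 1 \<and> n_assigned AA ph j = 1 \<and>
           (\<forall>c\<in>S. n_assigned AA ph c = 2 \<longrightarrow>
              (\<exists>A\<in>AA. \<exists>B\<in>AA. A \<noteq> B \<and> ph A = c \<and> ph B = c \<and>
                 A \<subseteq> cyc_open n i j \<and> B \<subseteq> cyc_open n j i))"
      proof (rule bexI[where x=j])
        show "i \<noteq> j \<and> n_assigned AA ph i = 1 \<and> n_assigned AA ph j = 1 \<and>
           (\<forall>c\<in>S. n_assigned AA ph c = 2 \<longrightarrow>
              (\<exists>A\<in>AA. \<exists>B\<in>AA. A \<noteq> B \<and> ph A = c \<and> ph B = c \<and>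
                 A \<subseteq> cyc_open n i j \<and> B \<subseteq> cyc_open n j i))"
          by (intro conjI ij in1 jn1 allc)
      qed (rule j(1))
    qed (rule i(1))
  qed
qed

end

theorem lemma4:
  fixes n :: nat and p :: "nat \<Rightarrow> real^2" and w :: "nat \<Rightarrow> real"
    and S :: "nat set" and \<A> :: "nat set set" and \<phi> :: "nat set \<Rightarrow> nat"
  assumes P: "convex_ccw n p"
    and wpos: "\<forall>k<n. w k > 0"
    and opt: "optimal_dominating n p w S"
    and two: "card S \<ge> 2"
    and asg: "assignment n p S \<A> \<phi>"
    and c1: "line_separable p S \<A> \<phi>"
    and c2: "\<forall>c\<in>S. n_assigned \<A> \<phi> c \<le> 2 \<and> (\<exists>A\<in>\<A>. \<phi> A = c \<and> c \<in> A)"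
    and c3: "\<forall>i\<in>S. \<forall>B\<in>\<A>. \<phi> B = i \<and> i \<notin> B \<longrightarrow>
               (\<exists>t\<in>B. \<exists>q1\<in>S. \<exists>q2\<in>S. q1 \<in> cyc_open n i t \<and> q2 \<in> cyc_open n t i \<and>
                  dist (p t) (p q1) > 1 \<and> dist (p t) (p q2) > 1)"
  shows "\<exists>i\<in>S. \<exists>j\<in>S. i \<noteq> j \<and>
           n_assigned \<A> \<phi> i = 1 \<and> n_assigned \<A> \<phi> j = 1 \<and>
           (\<forall>c\<in>S. n_assigned \<A> \<phi> c = 2 \<longrightarrow>
              (\<exists>A\<in>\<A>. \<exists>B\<in>\<A>. A \<noteq> B \<and> \<phi> A = c \<and> \<phi> B = c \<and>
                 A \<subseteq> cyc_open n i j \<and> B \<subseteq> cyc_open n j i))"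
proof -
  interpret lm n p w S \<A> \<phi> using P wpos opt asg c1 c2 c3 by unfold_locales
  show ?thesis using main[OF two] .
qed

end
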